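(* Let $h\ge1$ and $c$ be integers with $c>2(h+1)$. Let $G$ be the $h\times2^h$ binary reflected Gray code matrix: for $0\le m<2^h$, column $m$ of $G$ is the binary representation of $m\oplus\lfloor m/2\rfloor$ (bitwise XOR), with row $0$ the most significant bit and row $h-1$ the least significant bit. For $i\in\{0,\dots,c-1\}$ let $G^+(i)$ be the $c\times2^h$ binary matrix (rows indexed $0,\dots,c-1$) whose row $i$ is all ones, whose row $(i+k)\bmod c$ equals row $k-1$ of $G$ for $k=1,\dots,h$, and whose remaining rows are zero. Let $\mathbf{B}=[\,\mathbf{0}\;G^+(c-1)\;G^+(c-2)\;\cdots\;G^+(0)\,]$, a $c\times\ell$ matrix with $\ell=c2^h+1$, where $\mathbf{0}$ is the zero column. Then $\mathbf{B}$ satisfies: (1) the $2\ell$ vectors consisting of the columns of $\mathbf{B}$ and their binary complements are pairwise distinct; (2) the first column of $\mathbf{B}$ is zero; (3) every row of $\sigma(\mathbf{B})-\mathbf{B}$ has exactly $2^{h-1}+1$ entries equal to $-1$, where $\sigma(\mathbf{B})(\cdot,i)=\mathbf{B}(\cdot,(i+1)\bmod\ell)$.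
   Context: Columns of $\mathbf{B}$ are indexed $0,\dots,\ell-1$. The number of $-1$ entries in a row of $\sigma(\mathbf{B})-\mathbf{B}$ is the number of positions $t$ with $\mathbf{B}(r,t)=1$ and $\mathbf{B}(r,(t+1)\bmod\ell)=0$. *)

theory Defs
  imports Main
begin

(* Binary matrices are represented as functions  row => column => int  (entries 0/1),
   with rows indexed 0..c-1 and columns 0..l-1. *)

definition gray :: "nat \<Rightarrow> nat \<Rightarrow> nat \<Rightarrow> int" where
  "gray h k m = (if bit (xor m (m div 2)) (h - 1 - k) then 1 else 0)"

definition Gplus :: "nat \<Rightarrow> nat \<Rightarrow> nat \<Rightarrow> nat \<Rightarrow> nat \<Rightarrow> int" where
  "Gplus h c i r m =
     (if r = i then 1
      else if (\<exists>k\<in>{1..h}. r = (i + k) mod c)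
           then gray h ((THE k. k \<in> {1..h} \<and> r = (i + k) mod c) - 1) m
      else 0)"

(* B = [0  G^+(c-1)  G^+(c-2) ... G^+(0)], c x (c*2^h + 1). Column 1 + q*2^h + m
   (q < c, m < 2^h) is column m of G^+(c-1-q). *)
definition Bmat :: "nat \<Rightarrow> nat \<Rightarrow> nat \<Rightarrow> nat \<Rightarrow> int" where
  "Bmat h c r j =
     (if j = 0 then 0
      else Gplus h c (c - 1 - (j - 1) div 2 ^ h) r ((j - 1) mod 2 ^ h))"

definition ell :: "nat \<Rightarrow> nat \<Rightarrow> nat" where
  "ell h c = c * 2 ^ h + 1"

definition col :: "nat \<Rightarrow> (nat \<Rightarrow> nat \<Rightarrow> int) \<Rightarrow> nat \<Rightarrow> int list" where
  "col c B j = map (\<lambda>r. B r j) [0..<c]"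

definition ccol :: "nat \<Rightarrow> (nat \<Rightarrow> nat \<Rightarrow> int) \<Rightarrow> nat \<Rightarrow> int list" where
  "ccol c B j = map (\<lambda>r. 1 - B r j) [0..<c]"

definition sigma :: "nat \<Rightarrow> (nat \<Rightarrow> nat \<Rightarrow> int) \<Rightarrow> nat \<Rightarrow> nat \<Rightarrow> int" where
  "sigma l B r i = B r ((i + 1) mod l)"

end

theory Submission
  imports Defs
begin


lemma mod_lt2: "x < 2 * (c::nat) \<Longrightarrow> x mod c = (if x < c then x else x - c)"
  by (simp add: le_mod_geq)

lemma cancel: assumes "(i + k) mod (c::nat) = (i + k') mod c" "k < c" "k' < c" shows "k = k'"
proof -
  have c0: "c > 0" using assms by auto
  define a where "a = i mod c"
  have a: "a < c" using c0 a_def by auto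
  have "(a + k) mod c = (a + k') mod c" using assms(1) unfolding a_def by (metis mod_add_left_eq)
  then show ?thesis using a assms(2,3) mod_lt2[of "a+k" c] mod_lt2[of "a+k'" c]
    by (auto split: if_splits)
qed

lemma bit_high: "(m::nat) < 2 ^ h \<Longrightarrow> h \<le> n \<Longrightarrow> \<not> bit m n"
  by (metis bit_take_bit_iff not_le take_bit_nat_eq_self_iff)

lemma xor_div2: "(xor (a::nat) b) div 2 = xor (a div 2) (b div 2)"
  using drop_bit_xor[of 1 a b] by (simp add: drop_bit_eq_div)

lemma gray_inj: "xor (m::nat) (m div 2) = xor m' (m' div 2) \<Longrightarrow> m = m'"
proof (induction m arbitrary: m' rule: less_induct)
  case (less m)
  show ?case
  proof (cases "m = 0")
    case True
    then have "xor m' (m' div 2) = 0" using less.prems by simp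
    have "m' = xor (xor m' (m' div 2)) (m' div 2)" by (simp add: xor.assoc)
    also have "\<dots> = m' div 2" using \<open>xor m' (m' div 2) = 0\<close> by simp
    finally have "m' = m' div 2" .
    then show ?thesis using True by presburger
  next
    case False
    have "xor (m div 2) (m div 2 div 2) = xor (m' div 2) (m' div 2 div 2)"
      using arg_cong[OF less.prems, of "\<lambda>x. x div 2"] by (simp add: xor_div2)
    then have e: "m div 2 = m' div 2" using less.IH[of "m div 2"] False by simp
    have "m = xor (xor m (m div 2)) (m div 2)" by (simp add: xor.assoc)
    also have "\<dots> = xor (xor m' (m' div 2)) (m' div 2)" using less.prems e by simp
    also have "\<dots> = m'" by (simp add: xor.assoc)
    finally show ?thesis .
  qed
qed

definition gbit :: "nat \<Rightarrow> nat \<Rightarrow> bool" where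
  "gbit p m = (bit m p \<noteq> bit m (Suc p))"

lemma gray_gbit: "gray h k m = (if gbit (h - 1 - k) m then 1 else 0)"
  by (simp add: gray_def gbit_def bit_xor_iff bit_Suc)

lemma aux2: "A = 2*X + (m::nat) mod 2 \<Longrightarrow> R = 2*Y+1 \<Longrightarrow> (A = R) = (odd m \<and> X = Y)"
  by presburger

lemma key: "(gbit p m \<and> \<not> gbit p (Suc m)) \<longleftrightarrow> m mod 2 ^ (p + 2) = 3 * 2 ^ p - 1"
proof (induction p arbitrary: m)
  case 0
  have "bit m 1 = odd (m div 2)" "bit (Suc m) 1 = odd (Suc m div 2)"
    by (simp_all add: bit_Suc bit_0)
  then show ?case by (simp add: gbit_def bit_0) presburger
next
  case (Suc p)
  have g: "gbit (Suc p) x = gbit p (x div 2)" for x by (simp add: gbit_def bit_Suc)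
  have "m mod 2 ^ (Suc p + 2) = 2 * (m div 2 mod 2 ^ (p+2)) + m mod 2"
    by (metis mod_mult2_eq power_Suc add_Suc)
  moreover have "(3::nat) * 2 ^ Suc p - 1 = 2 * (3 * 2 ^ p - 1) + 1"
  proof -
    have "(1::nat) \<le> 2 ^ p" by simp
    then show ?thesis unfolding power_Suc by linarith
  qed
  ultimately have r: "m mod 2 ^ (Suc p + 2) = 3 * 2 ^ Suc p - 1 \<longleftrightarrow>
      odd m \<and> m div 2 mod 2 ^ (p+2) = 3 * 2 ^ p - 1"
    using aux2 by blast
  show ?case
  proof (cases "odd m")
    case True
    then have "Suc m div 2 = Suc (m div 2)" by presburger
    then show ?thesis using r Suc.IH[of "m div 2"] True by (simp add: g)
  next
    case False
    then have "Suc m div 2 = m div 2" by presburger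
    then show ?thesis using r False by (simp add: g)
  qed
qed

lemma count_mod: assumes "a < (D::nat)" shows "card {m. m < N * D \<and> m mod D = a} = N"
proof -
  have "{m. m < N * D \<and> m mod D = a} = (\<lambda>x. x * D + a) ` {..<N}"
  proof (intro set_eqI iffI)
    fix m assume m: "m \<in> {m. m < N * D \<and> m mod D = a}"
    then have m1: "m < N * D" and m2: "m mod D = a" by simp_all
    have "m = (m div D) * D + m mod D" by simp
    then have "m = (m div D) * D + a" using m2 by simp
    moreover have "m div D < N" using m1 by (simp add: less_mult_imp_div_less)
    ultimately show "m \<in> (\<lambda>x. x * D + a) ` {..<N}" by blast
  next
    fix m assume "m \<in> (\<lambda>x. x * D + a) ` {..<N}"
    then obtain x where x: "x < N" "m = x * D + a" by auto
    have "x * D + a < (x+1) * D" using assms by simp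
    also have "\<dots> \<le> N * D" using x(1) by (intro mult_right_mono) simp_all
    finally have "m < N * D" using x(2) by simp
    moreover have "m mod D = a" using x(2) assms by simp
    ultimately show "m \<in> {m. m < N * D \<and> m mod D = a}" by simp
  qed
  moreover have "inj_on (\<lambda>x. x * D + a) {..<N}" using assms by (intro inj_onI) simp
  ultimately show ?thesis by (simp add: card_image)
qed

lemma bit_mask_nat: "n < h \<Longrightarrow> bit ((2::nat) ^ h - 1) n"
proof -
  assume "n < h"
  have "(2::nat) ^ h - 1 = mask h" by (simp add: mask_eq_exp_minus_1)
  then show ?thesis using \<open>n < h\<close> by (simp add: bit_mask_iff possible_bit_def)
qed

definition T :: "nat \<Rightarrow> nat \<Rightarrow> nat" where
  "T h k = card {m. m < 2 ^ h \<and> gray h k m = 1 \<and> (m + 1 < 2 ^ h \<longrightarrow> gray h k (m + 1) = 0)}"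

lemma T_pos: assumes "1 \<le> k" "k < h" shows "T h k = 2 ^ (k - 1)"
proof -
  define p where "p = h - 1 - k"
  have hp: "h = (k - 1) + (p + 2)" using assms p_def by simp
  have pw: "(2::nat) ^ h = 2 ^ (k-1) * 2 ^ (p+2)" by (subst hp, simp add: power_add)
  have g: "gray h k x = (if gbit p x then 1 else 0)" for x by (simp add: gray_gbit p_def)
  have "{m. m < 2 ^ h \<and> gray h k m = 1 \<and> (m + 1 < 2 ^ h \<longrightarrow> gray h k (m + 1) = 0)}
      = {m. m < 2 ^ (k-1) * 2 ^ (p+2) \<and> m mod 2 ^ (p+2) = 3 * 2 ^ p - 1}"
  proof (intro set_eqI iffI)
    fix m :: nat assume "m \<in> {m. m < 2 ^ h \<and> gray h k m = 1 \<and> (m + 1 < 2 ^ h \<longrightarrow> gray h k (m + 1) = 0)}"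
    then have m: "m < 2 ^ h" "gbit p m" "m + 1 < 2 ^ h \<longrightarrow> \<not> gbit p (Suc m)" by (auto simp: g split: if_splits)
    have "m + 1 < 2 ^ h"
    proof (rule ccontr)
      assume "\<not> m + 1 < 2 ^ h"
      then have "m = 2 ^ h - 1" using m by simp
      then have "bit m p" "bit m (Suc p)" using bit_mask_nat[of p h] bit_mask_nat[of "Suc p" h] hp by auto
      then show False using m(2) by (simp add: gbit_def)
    qed
    then show "m \<in> {m. m < 2 ^ (k-1) * 2 ^ (p+2) \<and> m mod 2 ^ (p+2) = 3 * 2 ^ p - 1}"
      using m key[of p m] pw by auto
  next
    fix m :: nat assume "m \<in> {m. m < 2 ^ (k-1) * 2 ^ (p+2) \<and> m mod 2 ^ (p+2) = 3 * 2 ^ p - 1}"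
    then have m: "m < 2 ^ h" "gbit p m" "\<not> gbit p (Suc m)" using key[of p m] pw by auto
    show "m \<in> {m. m < 2 ^ h \<and> gray h k m = 1 \<and> (m + 1 < 2 ^ h \<longrightarrow> gray h k (m + 1) = 0)}"
      using m by (simp add: g)
  qed
  moreover have "3 * 2 ^ p - 1 < (2::nat) ^ (p+2)"
  proof -
    have "(1::nat) \<le> 2 ^ p" by simp
    moreover have "(2::nat) ^ (p+2) = 4 * 2 ^ p" by (simp add: power_add)
    ultimately show ?thesis by linarith
  qed
  ultimately show ?thesis unfolding T_def using count_mod by simp
qed


lemma bit_top: assumes "(m::nat) < 2 ^ Suc n" shows "bit m n \<longleftrightarrow> 2 ^ n \<le> m"
proof -
  have "m div 2 ^ n < 2" using assms by (simp add: less_mult_imp_div_less mult.commute)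
  moreover have "0 < m div 2 ^ n \<longleftrightarrow> 2 ^ n \<le> m" by (simp add: div_greater_zero_iff)
  moreover have "\<And>q::nat. q < 2 \<Longrightarrow> odd q = (0 < q)" by presburger
  ultimately show ?thesis by (simp add: bit_iff_odd)
qed

lemma T_zero: assumes "1 \<le> h" shows "T h 0 = 1"
proof -
  have hh: "h = Suc (h - 1)" using assms by simp
  have g: "m < 2 ^ h \<Longrightarrow> gray h 0 m = (if 2 ^ (h-1) \<le> m then 1 else 0)" for m
    using bit_top[of m "h-1"] bit_high[of m h h] hh by (simp add: gray_gbit gbit_def)
  have "{m. m < 2 ^ h \<and> gray h 0 m = 1 \<and> (m + 1 < 2 ^ h \<longrightarrow> gray h 0 (m + 1) = 0)} = {2 ^ h - 1}"
  proof (intro set_eqI iffI)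
    fix m assume "m \<in> {m. m < 2 ^ h \<and> gray h 0 m = 1 \<and> (m + 1 < 2 ^ h \<longrightarrow> gray h 0 (m + 1) = 0)}"
    then have m: "m < 2 ^ h" "2 ^ (h-1) \<le> m" "m + 1 < 2 ^ h \<longrightarrow> \<not> 2 ^ (h-1) \<le> m + 1"
      using g[of m] g[of "m+1"] by (auto split: if_splits)
    then have "\<not> m + 1 < 2 ^ h" by auto
    then show "m \<in> {2 ^ h - 1}" using m(1) by simp
  next
    fix m assume "m \<in> {2 ^ h - 1 :: nat}"
    moreover have "(2::nat) ^ (h-1) \<le> 2 ^ h - 1"
    proof -
      have "(1::nat) \<le> 2 ^ (h-1)" by simp
      moreover have "(2::nat) ^ h = 2 * 2 ^ (h-1)" by (subst hh, simp)
      ultimately show ?thesis by linarith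
    qed
    ultimately show "m \<in> {m. m < 2 ^ h \<and> gray h 0 m = 1 \<and> (m + 1 < 2 ^ h \<longrightarrow> gray h 0 (m + 1) = 0)}"
      using g[of m] by simp
  qed
  then show ?thesis unfolding T_def by simp
qed

lemma sum_pow2: "(\<Sum>k<n. (2::nat) ^ k) = 2 ^ n - 1"
  by (induction n) auto

lemma T_sum: assumes "1 \<le> h" shows "(\<Sum>k<h. T h k) = 2 ^ (h - 1)"
proof -
  have hh: "h = Suc (h - 1)" using assms by simp
  have "(\<Sum>k<h. T h k) = T h 0 + (\<Sum>k<h-1. T h (Suc k))"
    by (subst hh, subst sum.lessThan_Suc_shift, simp)
  also have "(\<Sum>k<h-1. T h (Suc k)) = (\<Sum>k<h-1. 2 ^ k)"
    by (intro sum.cong) (auto simp: T_pos)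
  finally show ?thesis using T_zero[OF assms] sum_pow2[of "h-1"] by simp
qed




lemma gray01: "gray h k m = 0 \<or> gray h k m = 1" by (simp add: gray_def)
lemma gray_zero: "gray h k 0 = 0" by (simp add: gray_def)

lemma Gplus01: "Gplus h c i r m = 0 \<or> Gplus h c i r m = 1"
  using gray01 by (simp add: Gplus_def)

lemma Bmat01: "Bmat h c r j = 0 \<or> Bmat h c r j = 1"
  using Gplus01 by (simp add: Bmat_def)

definition W :: "nat \<Rightarrow> nat \<Rightarrow> nat \<Rightarrow> nat set" where
  "W c h i = (\<lambda>k. (i + k) mod c) ` {0..h}"

lemma Gplus_self: "Gplus h c i i m = 1" by (simp add: Gplus_def)

lemma Gplus_supp: assumes "i < c" "Gplus h c i r m \<noteq> 0" shows "r \<in> W c h i"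
proof (cases "r = i")
  case True
  then have "r = (i + 0) mod c" using assms by simp
  moreover have "(0::nat) \<in> {0..h}" by simp
  ultimately show ?thesis unfolding W_def by (rule rev_image_eqI[rotated])
next
  case False
  have "\<exists>k\<in>{1..h}. r = (i + k) mod c"
  proof (rule ccontr)
    assume nex: "\<not> (\<exists>k\<in>{1..h}. r = (i + k) mod c)"
    have "Gplus h c i r m = 0" unfolding Gplus_def if_not_P[OF False] if_not_P[OF nex] ..
    then show False using assms(2) by simp
  qed
  then obtain k where "k \<in> {1..h}" "r = (i + k) mod c" by blast
  moreover have "k \<in> {0..h}" using calculation by simp
  ultimately show ?thesis unfolding W_def by (intro rev_image_eqI[of k]) simp_all
qed

lemma Gplus_at: assumes "h < c" "i < c" "1 \<le> k" "k \<le> h"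
  shows "Gplus h c i ((i + k) mod c) m = gray h (k - 1) m"
proof -
  have ne: "(i + k) mod c \<noteq> i"
  proof
    assume "(i + k) mod c = i"
    then have "(i + k) mod c = (i + 0) mod c" using assms by simp
    moreover have "k < c" "0 < c" using assms(1,4) by linarith+
    ultimately have "k = 0" using cancel by blast
    then show False using assms by simp
  qed
  have ex: "\<exists>k'\<in>{1..h}. (i + k) mod c = (i + k') mod c" using assms by auto
  have th: "(THE k'. k' \<in> {1..h} \<and> (i + k) mod c = (i + k') mod c) = k"
  proof (rule the_equality)
    show "k \<in> {1..h} \<and> (i + k) mod c = (i + k) mod c" using assms by simp
  next
    fix k' assume "k' \<in> {1..h} \<and> (i + k) mod c = (i + k') mod c"
    then have k1: "(i + k) mod c = (i + k') mod c" and k2: "k' \<le> h" by auto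
    have "k < c" "k' < c" using assms(1,4) k2 by linarith+
    then show "k' = k" using cancel[OF k1] by simp
  qed
  show ?thesis unfolding Gplus_def if_not_P[OF ne] if_P[OF ex] th ..
qed

lemma W_swap: assumes "2 * h < c" "i < c" "i' < c" "i' \<in> W c h i" "i \<in> W c h i'"
  shows "i = i'"
proof -
  obtain k where k0: "k \<in> {0..h}" and k2: "i' = (i + k) mod c" using assms(4) unfolding W_def by blast
  obtain k' where k'0: "k' \<in> {0..h}" and k'2: "i = (i' + k') mod c" using assms(5) unfolding W_def by blast
  have k: "k \<le> h" "i' = (i + k) mod c" using k0 k2 by auto
  have k': "k' \<le> h" "i = (i' + k') mod c" using k'0 k'2 by auto
  have "i = ((i + k) mod c + k') mod c" by (subst k(2)[symmetric]) (rule k'(2))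
  also have "\<dots> = (i + (k + k')) mod c" by (simp add: mod_add_left_eq add.assoc)
  finally have e1: "i = (i + (k + k')) mod c" .
  have e2: "(i + 0) mod c = i" using assms(2) by simp
  have "(i + (k + k')) mod c = (i + 0) mod c" by (simp only: e2 e1[symmetric])
  then have "k + k' = 0" using cancel[of i "k+k'" c 0] assms(1) k(1) k'(1) by simp
  then have "k = 0" by simp
  then show ?thesis using k(2) assms(2) by simp
qed

lemma W_card: "card (W c h i) \<le> h + 1"
  unfolding W_def using card_image_le[of "{0..h}" "\<lambda>k. (i + k) mod c"] by simp

lemma free_row: assumes "2 * (h + 1) < c" shows "\<exists>r<c. r \<notin> W c h i \<and> r \<notin> W c h i'"
proof (rule ccontr)
  assume "\<not> ?thesis"
  then have "{0..<c} \<subseteq> W c h i \<union> W c h i'" by auto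
  then have "card {0..<c} \<le> card (W c h i \<union> W c h i')"
    by (intro card_mono) (auto simp: W_def)
  also have "\<dots> \<le> card (W c h i) + card (W c h i')" by (rule card_Un_le)
  also have "\<dots> \<le> 2 * (h + 1)" using W_card[of c h i] W_card[of c h i'] by simp
  finally show False using assms by simp
qed

lemma Bmat_dec: assumes "m < 2 ^ h"
  shows "Bmat h c r (Suc (q * 2 ^ h + m)) = Gplus h c (c - 1 - q) r m"
  using assms by (simp add: Bmat_def)




lemma col_eq_iff: "col c B j = col c B j' \<longleftrightarrow> (\<forall>r<c. B r j = B r j')"
  by (auto simp: col_def map_eq_conv)

lemma ccol_eq_iff: "ccol c B j = ccol c B j' \<longleftrightarrow> (\<forall>r<c. B r j = B r j')"
  by (auto simp: ccol_def map_eq_conv)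

lemma ccol_col_iff: "ccol c B j = col c B j' \<longleftrightarrow> (\<forall>r<c. 1 - B r j = B r j')"
  by (auto simp: ccol_def col_def map_eq_conv)

lemma col_dec: assumes "0 < j" "j < ell h c"
  obtains q m where "q < c" "m < 2 ^ h" "j = Suc (q * 2 ^ h + m)"
proof -
  define q where "q = (j - 1) div 2 ^ h"
  define m where "m = (j - 1) mod 2 ^ h"
  have "j - 1 < c * 2 ^ h" using assms by (simp add: ell_def)
  then have "q < c" unfolding q_def by (simp add: less_mult_imp_div_less)
  moreover have "m < 2 ^ h" unfolding m_def by simp
  moreover have "j - 1 = q * 2 ^ h + m" unfolding q_def m_def by (rule div_mult_mod_eq[symmetric])
  then have "j = Suc (q * 2 ^ h + m)" using assms(1) by linarith
  ultimately show ?thesis using that by blast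
qed

definition colidx :: "nat \<Rightarrow> nat \<Rightarrow> nat \<Rightarrow> nat" where
  "colidx h c j = c - 1 - (j - 1) div 2 ^ h"

lemma Bmat_supp: assumes "j < ell h c" "Bmat h c r j \<noteq> 0" shows "r \<in> W c h (colidx h c j)"
proof -
  have "0 < j"
  proof (rule ccontr)
    assume "\<not> 0 < j"
    then have "Bmat h c r j = 0" by (simp add: Bmat_def)
    then show False using assms(2) by simp
  qed
  then obtain q m where qm: "q < c" "m < 2 ^ h" "j = Suc (q * 2 ^ h + m)" using col_dec[OF _ assms(1)] by blast
  have ci: "colidx h c j = c - 1 - q" using qm by (simp add: colidx_def)
  have "Bmat h c r j = Gplus h c (c - 1 - q) r m" by (simp only: qm(3) Bmat_dec[OF qm(2)])
  then have "Gplus h c (c - 1 - q) r m \<noteq> 0" using assms(2) by simp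
  moreover have "c - 1 - q < c" using qm(1) by simp
  ultimately have "r \<in> W c h (c - 1 - q)" using Gplus_supp by blast
  then show ?thesis by (simp only: ci)
qed

lemma colinj: assumes "2 * (h + 1) < c" "j < ell h c" "j' < ell h c"
  "\<forall>r<c. Bmat h c r j = Bmat h c r j'" shows "j = j'"
proof -
  have nz: "\<exists>r<c. Bmat h c r x = 1 \<and> Bmat h c r 0 = 0" if x0: "0 < x" "x < ell h c" for x
  proof -
    obtain q m where qm: "q < c" "m < 2 ^ h" "x = Suc (q * 2 ^ h + m)" using col_dec[OF x0] by blast
    have "Bmat h c (c - 1 - q) x = 1" by (simp add: qm(3) Bmat_dec[OF qm(2)] Gplus_self)
    moreover have "c - 1 - q < c" using qm by simp
    moreover have "Bmat h c (c - 1 - q) 0 = 0" by (simp add: Bmat_def)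
    ultimately show ?thesis by blast
  qed
  show ?thesis
  proof (cases "j = 0 \<or> j' = 0")
    case True
    show ?thesis
    proof (cases "j = 0")
      case j0: True
      show ?thesis
      proof (rule ccontr)
        assume "j \<noteq> j'"
        then have "0 < j'" using j0 by simp
        then obtain r where "r < c" "Bmat h c r j' = 1" "Bmat h c r 0 = 0" using nz[of j'] assms(3) by blast
        then show False using assms(4) j0 by auto
      qed
    next
      case j0: False
      then have j'0: "j' = 0" using True by simp
      have "0 < j" using j0 by simp
      obtain r where "r < c" "Bmat h c r j = 1" "Bmat h c r 0 = 0" using nz[of j] assms(2) \<open>0 < j\<close> by blast
      then show ?thesis using assms(4) j'0 by auto
    qed
  next
    case False
    have pj: "0 < j" "0 < j'" using False by auto
    obtain q m where qm: "q < c" "m < 2 ^ h" "j = Suc (q * 2 ^ h + m)" using col_dec[OF pj(1) assms(2)] by blast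
    obtain q' m' where qm': "q' < c" "m' < 2 ^ h" "j' = Suc (q' * 2 ^ h + m')" using col_dec[OF pj(2) assms(3)] by blast
    define i where "i = c - 1 - q"
    define i' where "i' = c - 1 - q'"
    have ic: "i < c" "i' < c" using qm qm' i_def i'_def by auto
    have Bj: "Bmat h c x j = Gplus h c i x m" for x by (simp add: qm(3) Bmat_dec[OF qm(2)] i_def)
    have Bj': "Bmat h c x j' = Gplus h c i' x m'" for x by (simp add: qm'(3) Bmat_dec[OF qm'(2)] i'_def)
    have "Gplus h c i i' m = Bmat h c i' j" using Bj by simp
    also have "\<dots> = Bmat h c i' j'" using assms(4) ic by simp
    also have "\<dots> = 1" using Bj' Gplus_self by simp
    finally have "Gplus h c i i' m = 1" .
    then have w1: "i' \<in> W c h i" using Gplus_supp[OF ic(1), of h i' m] by simp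
    have "Gplus h c i' i m' = Bmat h c i j'" using Bj' by simp
    also have "\<dots> = Bmat h c i j" using assms(4) ic by simp
    also have "\<dots> = 1" using Bj Gplus_self by simp
    finally have "Gplus h c i' i m' = 1" .
    then have w2: "i \<in> W c h i'" using Gplus_supp[OF ic(2), of h i m'] by simp
    have ii: "i = i'" using W_swap[OF _ ic(1) ic(2) w1 w2] assms(1) by simp
    then have qq: "q = q'" using i_def i'_def qm qm' by simp
    have "xor m (m div 2) = xor m' (m' div 2)"
    proof (rule bit_eqI)
      fix n
      show "bit (xor m (m div 2)) n = bit (xor m' (m' div 2)) n"
      proof (cases "n < h")
        case True
        define k where "k = h - n"
        have k: "1 \<le> k" "k \<le> h" using True k_def by auto
        have hc: "h < c" using assms(1) by simp
        have "(i + k) mod c < c" using ic by simp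
        then have "Gplus h c i ((i + k) mod c) m = Gplus h c i' ((i + k) mod c) m'"
          using assms(4) \<open>(i + k) mod c < c\<close> unfolding Bj Bj' by blast
        then have "gray h (k - 1) m = gray h (k - 1) m'"
          using Gplus_at[OF hc ic(1) k] ii by simp
        moreover have "h - 1 - (k - 1) = n" using k_def True by simp
        ultimately show ?thesis by (simp add: gray_def split: if_splits)
      next
        case False
        have "m div 2 < 2 ^ h" "m' div 2 < 2 ^ h" using qm qm' by auto
        then show ?thesis using bit_high[of m h n] bit_high[of "m div 2" h n]
          bit_high[of m' h n] bit_high[of "m' div 2" h n] qm(2) qm'(2) False
          by (simp add: bit_xor_iff)
      qed
    qed
    then have "m = m'" by (rule gray_inj)
    then show ?thesis using qm qm' qq by simp
  qed
qed

lemma part1: assumes "2 * (h + 1) < c"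
  shows "inj_on (\<lambda>(j, b). if b then ccol c (Bmat h c) j else col c (Bmat h c) j)
                ({0..<ell h c} \<times> (UNIV :: bool set))"
proof -
  have mix: False if "j < ell h c" "j' < ell h c" "ccol c (Bmat h c) j = col c (Bmat h c) j'" for j j'
  proof -
    obtain r where r: "r < c" "r \<notin> W c h (colidx h c j)" "r \<notin> W c h (colidx h c j')"
      using free_row[OF assms] by blast
    have "Bmat h c r j = 0" using Bmat_supp[OF that(1), of r] r(2) by blast
    moreover have "Bmat h c r j' = 0" using Bmat_supp[OF that(2), of r] r(3) by blast
    moreover have "\<forall>r<c. 1 - Bmat h c r j = Bmat h c r j'" using that(3) by (simp only: ccol_col_iff)
    ultimately show False using r(1) by auto
  qed
  show ?thesis
  proof (rule inj_onI)
    fix x y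
    assume x: "x \<in> {0..<ell h c} \<times> (UNIV :: bool set)" and y: "y \<in> {0..<ell h c} \<times> (UNIV :: bool set)"
      and e0: "(\<lambda>(j, b). if b then ccol c (Bmat h c) j else col c (Bmat h c) j) x =
              (\<lambda>(j, b). if b then ccol c (Bmat h c) j else col c (Bmat h c) j) y"
    obtain j b where xj: "x = (j, b)" by (cases x)
    obtain j' b' where yj: "y = (j', b')" by (cases y)
    have jl: "j < ell h c" "j' < ell h c" using x y xj yj by auto
    have e: "(if b then ccol c (Bmat h c) j else col c (Bmat h c) j) =
              (if b' then ccol c (Bmat h c) j' else col c (Bmat h c) j')" using e0 xj yj by simp
    have "j = j' \<and> b = b'"
    proof (cases b)
      case bT: True
      show ?thesis
      proof (cases b')
        case True
        then have "ccol c (Bmat h c) j = ccol c (Bmat h c) j'" using e bT by simp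
        then have "\<forall>r<c. Bmat h c r j = Bmat h c r j'" by (simp only: ccol_eq_iff)
        then show ?thesis using colinj[OF assms jl] bT True by simp
      next
        case False
        then have "ccol c (Bmat h c) j = col c (Bmat h c) j'" using e bT by simp
        then show ?thesis using mix jl by blast
      qed
    next
      case bF: False
      show ?thesis
      proof (cases b')
        case True
        then have "ccol c (Bmat h c) j' = col c (Bmat h c) j" using e bF by simp
        then show ?thesis using mix jl by blast
      next
        case False
        then have "col c (Bmat h c) j = col c (Bmat h c) j'" using e bF by simp
        then have "\<forall>r<c. Bmat h c r j = Bmat h c r j'" by (simp only: col_eq_iff)
        then show ?thesis using colinj[OF assms jl] bF False by simp
      qed
    qed
    then show "x = y" using xj yj by simp
  qed
qed

definition A :: "nat \<Rightarrow> nat \<Rightarrow> nat \<Rightarrow> nat \<Rightarrow> nat set" where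
  "A h c r i = {m. m < 2 ^ h \<and> Gplus h c i r m = 1 \<and> (m + 1 < 2 ^ h \<longrightarrow> Gplus h c i r (m + 1) = 0)}"

lemma cond_iff: "(sigma L (Bmat h c) r t - Bmat h c r t = -1) \<longleftrightarrow>
   (Bmat h c r t = 1 \<and> Bmat h c r ((t + 1) mod L) = 0)"
  using Bmat01[of h c r t] Bmat01[of h c r "(t + 1) mod L"] unfolding sigma_def by auto

lemma Gplus_m0: assumes "r \<noteq> i" shows "Gplus h c i r 0 = 0"
  unfolding Gplus_def gray_zero if_cancel using assms by simp

lemma qn_le: assumes "q < (c::nat)" shows "q * n + n \<le> c * n"
proof -
  have "Suc q * n \<le> c * n" using assms by (intro mult_le_mono1) simp
  then show ?thesis by simp
qed

lemma no_prev: assumes "2 * (h + 1) < c" "0 < i" "i < c" "Gplus h c i r m = 1"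
  shows "r \<noteq> i - 1"
proof
  assume ri: "r = i - 1"
  have "r \<in> W c h i" using Gplus_supp[OF assms(3), of h r m] assms(4) by simp
  then obtain k where k: "k \<in> {0..h}" "r = (i + k) mod c" unfolding W_def by blast
  have e1: "(i + (c - 1)) mod c = i - 1"
  proof -
    have ee: "i + (c - 1) = (i - 1) + c" using assms(2,3) by simp
    have "(i + (c - 1)) mod c = ((i - 1) + c) mod c" by (simp only: ee)
    also have "\<dots> = (i - 1) mod c" by (rule mod_add_self2)
    also have "\<dots> = i - 1" using assms(3) by simp
    finally show ?thesis .
  qed
  have e2: "(i + k) mod c = i - 1" using k(2) unfolding ri by (rule sym)
  have e3: "(i + k) mod c = (i + (c - 1)) mod c" by (simp only: e1 e2)
  have "k < c" "c - 1 < c" using k(1) assms(1) by auto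
  then have "k = c - 1" using cancel[OF e3] by blast
  then show False using k(1) assms(1) by simp
qed

lemma S_eq: assumes "2 * (h + 1) < c" "r < c"
  shows "{t \<in> {0..<ell h c}. sigma (ell h c) (Bmat h c) r t - Bmat h c r t = -1}
       = (\<lambda>(q, m). Suc (q * 2 ^ h + m)) ` (SIGMA q:{..<c}. A h c r (c - Suc q))"
    (is "?S = ?R")
proof (intro set_eqI iffI)
  fix t assume "t \<in> ?S"
  then have t0: "t < ell h c" "sigma (ell h c) (Bmat h c) r t - Bmat h c r t = -1" by simp_all
  then have t: "t < ell h c" "Bmat h c r t = 1" "Bmat h c r ((t + 1) mod ell h c) = 0"
    using cond_iff[THEN iffD1, OF t0(2)] by simp_all
  have "0 < t"
  proof (rule ccontr)
    assume "\<not> 0 < t"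
    then have "Bmat h c r t = 0" by (simp add: Bmat_def)
    then show False using t(2) by simp
  qed
  then obtain q m where qm: "q < c" "m < 2 ^ h" "t = Suc (q * 2 ^ h + m)" using col_dec[OF _ t(1)] by blast
  have Bt: "Bmat h c r t = Gplus h c (c - Suc q) r m" by (simp add: qm(3) Bmat_dec[OF qm(2)])
  have "m \<in> A h c r (c - Suc q)"
    unfolding A_def
  proof (intro CollectI conjI impI)
    show "m < 2 ^ h" by (rule qm(2))
    show "Gplus h c (c - Suc q) r m = 1" using Bt t(2) by simp
    assume m1: "m + 1 < 2 ^ h"
    have "q * 2 ^ h + 2 ^ h \<le> c * 2 ^ h" by (rule qn_le[OF qm(1)])
    then have lt: "t + 1 < ell h c" using qm(3) m1 by (simp add: ell_def)
    have "t + 1 = Suc (q * 2 ^ h + (m + 1))" using qm(3) by simp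
    then have "Bmat h c r ((t + 1) mod ell h c) = Gplus h c (c - Suc q) r (m + 1)"
      using lt Bmat_dec[OF m1, of c r q] by simp
    then show "Gplus h c (c - Suc q) r (m + 1) = 0" using t(3) by simp
  qed
  then have "(q, m) \<in> (SIGMA q:{..<c}. A h c r (c - Suc q))" using qm(1) by simp
  moreover have "t = (\<lambda>(q, m). Suc (q * 2 ^ h + m)) (q, m)" using qm(3) by simp
  ultimately show "t \<in> ?R" by (rule rev_image_eqI)
next
  fix t assume "t \<in> ?R"
  then obtain p where p: "p \<in> (SIGMA q:{..<c}. A h c r (c - Suc q))" "t = (\<lambda>(q, m). Suc (q * 2 ^ h + m)) p"
    by (rule imageE)
  obtain q m where pq: "p = (q, m)" by (cases p)
  have qm: "q < c" "m \<in> A h c r (c - Suc q)" "t = Suc (q * 2 ^ h + m)" using p unfolding pq by auto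
  have m: "m < 2 ^ h" "Gplus h c (c - Suc q) r m = 1"
     "m + 1 < 2 ^ h \<longrightarrow> Gplus h c (c - Suc q) r (m + 1) = 0" using qm(2) unfolding A_def by auto
  have qn: "q * 2 ^ h + 2 ^ h \<le> c * 2 ^ h" by (rule qn_le[OF qm(1)])
  have tl: "t < ell h c" using qm(3) m(1) qn by (simp add: ell_def)
  have Bt: "Bmat h c r t = 1" using m(2) by (simp add: qm(3) Bmat_dec[OF m(1)])
  have Bn: "Bmat h c r ((t + 1) mod ell h c) = 0"
  proof (cases "m + 1 < 2 ^ h")
    case True
    then have lt: "t + 1 < ell h c" using qm(3) qn by (simp add: ell_def)
    have "t + 1 = Suc (q * 2 ^ h + (m + 1))" using qm(3) by simp
    then have "Bmat h c r ((t + 1) mod ell h c) = Gplus h c (c - Suc q) r (m + 1)"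
      using lt Bmat_dec[OF True, of c r q] by simp
    then show ?thesis using m(3) True by simp
  next
    case False
    then have mn: "m + 1 = 2 ^ h" using m(1) by simp
    show ?thesis
    proof (cases "q + 1 < c")
      case True
      have qn2: "(q + 1) * 2 ^ h + 2 ^ h \<le> c * 2 ^ h" by (rule qn_le[OF True])
      have e: "t + 1 = Suc ((q + 1) * 2 ^ h + 0)" using qm(3) mn by simp
      have pos: "0 < (2::nat) ^ h" by simp
      have lt: "t + 1 < ell h c" using e qn2 pos unfolding ell_def by linarith
      have "Bmat h c r ((t + 1) mod ell h c) = Gplus h c (c - Suc (q + 1)) r 0"
        using lt e Bmat_dec[of 0 h c r "q+1"] by simp
      moreover have "r \<noteq> c - Suc q - 1"
        using no_prev[OF assms(1) _ _ m(2)] True by simp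
      moreover have "c - Suc (q + 1) = c - Suc q - 1" by simp
      ultimately have "r \<noteq> c - Suc (q + 1)" "Bmat h c r ((t + 1) mod ell h c) = Gplus h c (c - Suc (q + 1)) r 0" by simp_all
      then show ?thesis using Gplus_m0 by simp
    next
      case False
      then have "q + 1 = c" using qm(1) by simp
      have "t + 1 = q * 2 ^ h + (m + 1) + 1" using qm(3) by simp
      also have "\<dots> = (q + 1) * 2 ^ h + 1" using mn by simp
      also have "\<dots> = ell h c" using \<open>q + 1 = c\<close> by (simp add: ell_def)
      finally have "t + 1 = ell h c" .
      then show ?thesis by (simp add: Bmat_def)
    qed
  qed
  have "sigma (ell h c) (Bmat h c) r t - Bmat h c r t = -1" using cond_iff[THEN iffD2, OF conjI[OF Bt Bn]] .
  then show "t \<in> ?S" using tl by simp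
qed

lemma card_S: assumes "2 * (h + 1) < c" "r < c"
  shows "card {t \<in> {0..<ell h c}. sigma (ell h c) (Bmat h c) r t - Bmat h c r t = -1}
       = (\<Sum>i<c. card (A h c r i))"
proof -
  have inj: "inj_on (\<lambda>(q, m). Suc (q * 2 ^ h + m)) (SIGMA q:{..<c}. A h c r (c - Suc q))"
  proof (rule inj_onI)
    fix x y assume x: "x \<in> (SIGMA q:{..<c}. A h c r (c - Suc q))" and y: "y \<in> (SIGMA q:{..<c}. A h c r (c - Suc q))"
      and e: "(\<lambda>(q, m). Suc (q * 2 ^ h + m)) x = (\<lambda>(q, m). Suc (q * 2 ^ h + m)) y"
    obtain q m where xq: "x = (q, m)" by (cases x)
    obtain q' m' where yq: "y = (q', m')" by (cases y)
    have m: "m < 2 ^ h" "m' < 2 ^ h" using x y unfolding xq yq A_def by auto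
    have e2: "q * 2 ^ h + m = q' * 2 ^ h + m'" using e unfolding xq yq by simp
    have "(q * 2 ^ h + m) div 2 ^ h = q" "(q' * 2 ^ h + m') div 2 ^ h = q'" using m by simp_all
    moreover have "(q * 2 ^ h + m) mod 2 ^ h = m" "(q' * 2 ^ h + m') mod 2 ^ h = m'" using m by simp_all
    ultimately show "x = y" unfolding xq yq using e2 by metis
  qed
  have fin: "finite (A h c r i)" for i unfolding A_def by simp
  have "card {t \<in> {0..<ell h c}. sigma (ell h c) (Bmat h c) r t - Bmat h c r t = -1}
      = card (SIGMA q:{..<c}. A h c r (c - Suc q))"
    unfolding S_eq[OF assms] by (rule card_image[OF inj])
  also have "\<dots> = (\<Sum>q<c. card (A h c r (c - Suc q)))"
    by (rule card_SigmaI) (simp_all add: fin)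
  also have "\<dots> = (\<Sum>i<c. card (A h c r i))"
    by (rule sum.nat_diff_reindex)
  finally show ?thesis .
qed

lemma sum_A: assumes "1 \<le> h" "2 * (h + 1) < c" "r < c"
  shows "(\<Sum>i<c. card (A h c r i)) = 2 ^ (h - 1) + 1"
proof -
  define iof where "iof k = (r + c - k) mod c" for k
  have hc: "h < c" using assms by simp
  have io1: "(iof k + k) mod c = r" if "k \<le> h" for k
  proof -
    have "(iof k + k) mod c = (r + c - k + k) mod c" unfolding iof_def by (rule mod_add_left_eq)
    also have "r + c - k + k = r + c" using that hc by simp
    also have "(r + c) mod c = r" using assms(3) by simp
    finally show ?thesis .
  qed
  have io2: "iof k < c" for k unfolding iof_def using assms(3) by simp
  have inj: "inj_on iof {0..h}"
  proof (rule inj_onI)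
    fix k k' assume k: "k \<in> {0..h}" "k' \<in> {0..h}" "iof k = iof k'"
    have "(iof k + k) mod c = (iof k + k') mod c" using io1[of k] io1[of k'] k by simp
    moreover have "k < c" "k' < c" using k hc by auto
    ultimately show "k = k'" using cancel by blast
  qed
  have zero: "A h c r i = {}" if "i < c" "i \<notin> iof ` {0..h}" for i
  proof (rule ccontr)
    assume "A h c r i \<noteq> {}"
    then obtain m where "m \<in> A h c r i" by blast
    then have "Gplus h c i r m \<noteq> 0" unfolding A_def by auto
    then have "r \<in> W c h i" using Gplus_supp[OF that(1)] by blast
    then obtain k where k: "k \<in> {0..h}" "r = (i + k) mod c" unfolding W_def by blast
    have "iof k = ((i + k) mod c + c - k) mod c" unfolding iof_def k(2) ..
    also have "(i + k) mod c + c - k = (i + k) mod c + (c - k)" using k(1) hc by simp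
    also have "((i + k) mod c + (c - k)) mod c = (i + k + (c - k)) mod c" by (rule mod_add_left_eq)
    also have "i + k + (c - k) = i + c" using k(1) hc by simp
    also have "(i + c) mod c = i" using that(1) by simp
    finally have "i = iof k" by simp
    then show False using that(2) k(1) by blast
  qed
  have "(\<Sum>i<c. card (A h c r i)) = (\<Sum>i\<in>iof ` {0..h}. card (A h c r i))"
  proof (rule sum.mono_neutral_right)
    show "finite {..<c}" by simp
    show "iof ` {0..h} \<subseteq> {..<c}" using io2 by auto
    show "\<forall>i\<in>{..<c} - iof ` {0..h}. card (A h c r i) = 0" using zero by auto
  qed
  also have "\<dots> = (\<Sum>k\<in>{0..h}. card (A h c r (iof k)))"
    by (simp add: sum.reindex[OF inj])
  also have "{0..h} = insert 0 {1..h}" by auto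
  also have "(\<Sum>k\<in>insert 0 {1..h}. card (A h c r (iof k))) =
      card (A h c r (iof 0)) + (\<Sum>k\<in>{1..h}. card (A h c r (iof k)))"
    by (rule sum.insert) auto
  also have "iof 0 = r" unfolding iof_def using assms(3) by simp
  also have "A h c r r = {2 ^ h - 1}"
    unfolding A_def Gplus_self by auto
  also have "(\<Sum>k\<in>{1..h}. card (A h c r (iof k))) = (\<Sum>k\<in>{1..h}. T h (k - 1))"
  proof (rule sum.cong)
    fix k assume k: "k \<in> {1..h}"
    have g: "Gplus h c (iof k) r x = gray h (k - 1) x" for x
    proof -
      have kk: "1 \<le> k" "k \<le> h" using k by auto
      show ?thesis using Gplus_at[OF hc io2[of k] kk, of x] io1[OF kk(2)] by simp
    qed
    show "card (A h c r (iof k)) = T h (k - 1)" unfolding A_def T_def g by simp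
  qed simp
  also have "{1..h} = Suc ` {..<h}" by (simp add: image_Suc_lessThan)
  also have "(\<Sum>k\<in>Suc ` {..<h}. T h (k - 1)) = (\<Sum>k<h. T h k)"
    by (simp add: sum.reindex)
  also have "\<dots> = 2 ^ (h - 1)" by (rule T_sum[OF assms(1)])
  finally show ?thesis by simp
qed

theorem mainTheorem6:
  fixes h c :: nat
  assumes "h \<ge> 1" and "c > 2 * (h + 1)"
  shows "inj_on (\<lambda>(j, b). if b then ccol c (Bmat h c) j else col c (Bmat h c) j)
                ({0..<ell h c} \<times> (UNIV :: bool set))
       \<and> (\<forall>r<c. Bmat h c r 0 = 0)
       \<and> (\<forall>r<c. card {t \<in> {0..<ell h c}.
                 sigma (ell h c) (Bmat h c) r t - Bmat h c r t = -1} = 2 ^ (h - 1) + 1)"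
proof (intro conjI allI impI)
  show "inj_on (\<lambda>(j, b). if b then ccol c (Bmat h c) j else col c (Bmat h c) j)
                ({0..<ell h c} \<times> (UNIV :: bool set))" using part1 assms(2) by simp
next
  fix r :: nat assume "r < c"
  show "Bmat h c r 0 = 0" by (simp add: Bmat_def)
next
  fix r :: nat assume r: "r < c"
  show "card {t \<in> {0..<ell h c}. sigma (ell h c) (Bmat h c) r t - Bmat h c r t = -1} = 2 ^ (h - 1) + 1"
    using card_S[OF _ r] sum_A[OF assms(1) _ r] assms(2) by simp
qed


end
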